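(* Let $I$ be a set and $P_i$ ($i\in I$) pastures, and let $\bigotimes_{i\in I}P_i$ and $i_j:P_j\to\bigotimes_{i\in I}P_i$ be as described in the context. Then $\bigotimes_{i\in I}P_i$ is a pasture, and for each $j\in I$ the map $i_j$ is a morphism of pastures.
   Context: A pasture is a multiplicative monoid $P$ with a zero element $0$ (absorbing) such that $P^\times=P\setminus\{0\}$ is an abelian group, together with an involution $x\mapsto -x$ fixing $0$, and a subset $N_P\subseteq P^3$ (write $a+b+c=0$ for $(a,b,c)\in N_P$) such that: (1) $N_P$ is invariant under permutations; (2) if $a+b+c=0$ then $da+db+dc=0$ for all $d\in P$; (3) $a+b+0=0$ iff $a=-b$. A morphism of pastures is a multiplicative map $f$ with $f(0)=0$, $f(1)=1$, $f(-a)=-f(a)$, preserving nullsets. The coproduct: let $\bigoplus_{i\in I}P_i^\times$ be the set of families $(x_i)_{i\in I}$ with $x_i\in P_i^\times$ and $x_i=1_i$ for all but finitely many $i$. Define $(x_i)\sim(y_i)$ iff there is a finite set of indices of even cardinality on which $x_i=-y_i$, with $x_i=y_i$ at all other indices (an equivalence relation). Set $\bigotimes_{i\in I}P_i=\{0\}\cup(\bigoplus_{i\in I}P_i^\times/\sim)$, classes written $[(x_i)_{i\in I}]$. Multiplication: $0$ absorbing, $[(x_i)][(y_i)]=[(x_iy_i)]$. Involution: $-0=0$ and $-[(x_i)]=[(y_i)]$ where $y_j=-x_j$ for one chosen index $j$ and $y_i=x_i$ for $i\neq j$. Nullset: for nonzero elements, $[(x_i)]+[(y_i)]+[(z_i)]=0$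 iff there are representatives $(x_i'),(y_i'),(z_i')$ of these classes and an index $j$ with $x'_j+y'_j+z'_j=0$ in $P_j$ and $x'_i=y'_i=z'_i$ for all $i\neq j$; relations involving $0$ are the permutations of $u+v+0=0$ iff $u=-v$. The maps: $i_j(0)=0$ and $i_j(x)=[(y_i)_{i\in I}]$ with $y_j=x$ and $y_i=1_i$ for $i\neq j$. *)

theory Defs
  imports Main
begin

record 'a pasture =
  pcarrier :: "'a set"
  pzero    :: 'a
  pone     :: 'a
  pmult    :: "'a \<Rightarrow> 'a \<Rightarrow> 'a"
  pneg     :: "'a \<Rightarrow> 'a"
  pnull    :: "('a \<times> 'a \<times> 'a) set"

definition pasture :: "('a, 'b) pasture_scheme \<Rightarrow> bool" where
  "pasture P \<longleftrightarrow>
     pzero P \<in> pcarrier P \<and>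
     pone P \<in> pcarrier P - {pzero P} \<and>
     (\<forall>x\<in>pcarrier P. \<forall>y\<in>pcarrier P. pmult P x y \<in> pcarrier P) \<and>
     (\<forall>x\<in>pcarrier P. \<forall>y\<in>pcarrier P. \<forall>z\<in>pcarrier P.
         pmult P (pmult P x y) z = pmult P x (pmult P y z)) \<and>
     (\<forall>x\<in>pcarrier P. \<forall>y\<in>pcarrier P. pmult P x y = pmult P y x) \<and>
     (\<forall>x\<in>pcarrier P. pmult P (pone P) x = x) \<and>
     (\<forall>x\<in>pcarrier P. pmult P (pzero P) x = pzero P) \<and>
     (\<forall>x\<in>pcarrier P - {pzero P}. \<forall>y\<in>pcarrier P - {pzero P}. pmult P x y \<noteq> pzero P) \<and>
     (\<forall>x\<in>pcarrier P - {pzero P}. \<exists>y\<in>pcarrier P - {pzero P}. pmult P x y = pone P) \<and>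
     (\<forall>x\<in>pcarrier P. pneg P x \<in> pcarrier P \<and> pneg P (pneg P x) = x) \<and>
     pneg P (pzero P) = pzero P \<and>
     pnull P \<subseteq> pcarrier P \<times> pcarrier P \<times> pcarrier P \<and>
     (\<forall>a b c. (a, b, c) \<in> pnull P \<longrightarrow> (b, a, c) \<in> pnull P \<and> (a, c, b) \<in> pnull P) \<and>
     (\<forall>a b c. (a, b, c) \<in> pnull P \<longrightarrow> (\<forall>d\<in>pcarrier P.
         (pmult P d a, pmult P d b, pmult P d c) \<in> pnull P)) \<and>
     (\<forall>a\<in>pcarrier P. \<forall>b\<in>pcarrier P. (a, b, pzero P) \<in> pnull P \<longleftrightarrow> a = pneg P b)"

definition pasture_hom ::
  "('a, 'c) pasture_scheme \<Rightarrow> ('b, 'd) pasture_scheme \<Rightarrow> ('a \<Rightarrow> 'b) \<Rightarrow> bool" where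
  "pasture_hom P Q f \<longleftrightarrow>
     (\<forall>x\<in>pcarrier P. f x \<in> pcarrier Q) \<and>
     f (pzero P) = pzero Q \<and> f (pone P) = pone Q \<and>
     (\<forall>x\<in>pcarrier P. \<forall>y\<in>pcarrier P. f (pmult P x y) = pmult Q (f x) (f y)) \<and>
     (\<forall>x\<in>pcarrier P. f (pneg P x) = pneg Q (f x)) \<and>
     (\<forall>a b c. (a, b, c) \<in> pnull P \<longrightarrow> (f a, f b, f c) \<in> pnull Q)"

text \<open>Nonzero elements of the coproduct are equivalence classes of families (sets of functions);
  the zero element is represented by the empty set.\<close>

definition cp_fams :: "'i set \<Rightarrow> ('i \<Rightarrow> 'a pasture) \<Rightarrow> ('i \<Rightarrow> 'a) set" where
  "cp_fams I P = {x. (\<forall>i\<in>I. x i \<in> pcarrier (P i) - {pzero (P i)}) \<and>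
                      (\<forall>i. i \<notin> I \<longrightarrow> x i = undefined) \<and>
                      finite {i\<in>I. x i \<noteq> pone (P i)}}"

definition cp_rel :: "'i set \<Rightarrow> ('i \<Rightarrow> 'a pasture) \<Rightarrow> ('i \<Rightarrow> 'a) \<Rightarrow> ('i \<Rightarrow> 'a) \<Rightarrow> bool" where
  "cp_rel I P x y \<longleftrightarrow> (\<exists>S. S \<subseteq> I \<and> finite S \<and> even (card S) \<and>
       (\<forall>i\<in>S. x i = pneg (P i) (y i)) \<and> (\<forall>i\<in>I - S. x i = y i))"

definition cp_class :: "'i set \<Rightarrow> ('i \<Rightarrow> 'a pasture) \<Rightarrow> ('i \<Rightarrow> 'a) \<Rightarrow> ('i \<Rightarrow> 'a) set" where
  "cp_class I P x = {y \<in> cp_fams I P. cp_rel I P y x}"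

definition cp_rep :: "('i \<Rightarrow> 'a) set \<Rightarrow> ('i \<Rightarrow> 'a)" where
  "cp_rep A = (SOME x. x \<in> A)"

definition coprod :: "'i set \<Rightarrow> ('i \<Rightarrow> 'a pasture) \<Rightarrow> ('i \<Rightarrow> 'a) set pasture" where
  "coprod I P = \<lparr>
     pcarrier = {{}} \<union> cp_class I P ` cp_fams I P,
     pzero = {},
     pone = cp_class I P (\<lambda>i. if i \<in> I then pone (P i) else undefined),
     pmult = (\<lambda>A B. if A = {} \<or> B = {} then {}
                    else cp_class I P (\<lambda>i. if i \<in> I then pmult (P i) (cp_rep A i) (cp_rep B i)
                                           else undefined)),
     pneg = (\<lambda>A. if A = {} then {}
                 else if I = {} then A
                 else (let j = (SOME j. j \<in> I) in
                       cp_class I P ((cp_rep A)(j := pneg (P j) (cp_rep A j))))),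
     pnull = {(A, B, C). A \<in> cp_class I P ` cp_fams I P \<and> B \<in> cp_class I P ` cp_fams I P \<and>
                 C \<in> cp_class I P ` cp_fams I P \<and>
                 (\<exists>x\<in>A. \<exists>y\<in>B. \<exists>z\<in>C. \<exists>j\<in>I. (x j, y j, z j) \<in> pnull (P j) \<and>
                     (\<forall>i\<in>I - {j}. x i = y i \<and> y i = z i))}
           \<union> {(A, B, C). A \<in> {{}} \<union> cp_class I P ` cp_fams I P \<and>
                 B \<in> {{}} \<union> cp_class I P ` cp_fams I P \<and>
                 C \<in> {{}} \<union> cp_class I P ` cp_fams I P \<and>
                 ((C = {} \<and> A = (if B = {} then {} else if I = {} then B else
                      (let j = (SOME j. j \<in> I) in cp_class I P ((cp_rep B)(j := pneg (P j) (cp_rep B j)))))) \<or>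
                  (B = {} \<and> A = (if C = {} then {} else if I = {} then C else
                      (let j = (SOME j. j \<in> I) in cp_class I P ((cp_rep C)(j := pneg (P j) (cp_rep C j)))))) \<or>
                  (A = {} \<and> B = (if C = {} then {} else if I = {} then C else
                      (let j = (SOME j. j \<in> I) in cp_class I P ((cp_rep C)(j := pneg (P j) (cp_rep C j)))))))}
   \<rparr>"

definition cp_inj :: "'i set \<Rightarrow> ('i \<Rightarrow> 'a pasture) \<Rightarrow> 'i \<Rightarrow> 'a \<Rightarrow> ('i \<Rightarrow> 'a) set" where
  "cp_inj I P j x = (if x = pzero (P j) then {}
     else cp_class I P (\<lambda>i. if i = j then x else if i \<in> I then pone (P i) else undefined))"

end

theory Submission
  imports Defs
begin

context
  fixes Q :: "('a, 'b) pasture_scheme"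
  assumes pas: "pasture Q"
begin

lemma pD:
  "pzero Q \<in> pcarrier Q"
  "pone Q \<in> pcarrier Q - {pzero Q}"
  "(\<forall>x\<in>pcarrier Q. \<forall>y\<in>pcarrier Q. pmult Q x y \<in> pcarrier Q)"
  "(\<forall>x\<in>pcarrier Q. \<forall>y\<in>pcarrier Q. \<forall>z\<in>pcarrier Q.
         pmult Q (pmult Q x y) z = pmult Q x (pmult Q y z))"
  "(\<forall>x\<in>pcarrier Q. \<forall>y\<in>pcarrier Q. pmult Q x y = pmult Q y x)"
  "(\<forall>x\<in>pcarrier Q. pmult Q (pone Q) x = x)"
  "(\<forall>x\<in>pcarrier Q. pmult Q (pzero Q) x = pzero Q)"
  "(\<forall>x\<in>pcarrier Q - {pzero Q}. \<forall>y\<in>pcarrier Q - {pzero Q}. pmult Q x y \<noteq> pzero Q)"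
  "(\<forall>x\<in>pcarrier Q - {pzero Q}. \<exists>y\<in>pcarrier Q - {pzero Q}. pmult Q x y = pone Q)"
  "(\<forall>x\<in>pcarrier Q. pneg Q x \<in> pcarrier Q \<and> pneg Q (pneg Q x) = x)"
  "pneg Q (pzero Q) = pzero Q"
  "pnull Q \<subseteq> pcarrier Q \<times> pcarrier Q \<times> pcarrier Q"
  "(\<forall>a b c. (a, b, c) \<in> pnull Q \<longrightarrow> (b, a, c) \<in> pnull Q \<and> (a, c, b) \<in> pnull Q)"
  "(\<forall>a b c. (a, b, c) \<in> pnull Q \<longrightarrow> (\<forall>d\<in>pcarrier Q.
         (pmult Q d a, pmult Q d b, pmult Q d c) \<in> pnull Q))"
  "(\<forall>a\<in>pcarrier Q. \<forall>b\<in>pcarrier Q. (a, b, pzero Q) \<in> pnull Q \<longleftrightarrow> a = pneg Q b)"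
  apply (insert pas[unfolded pasture_def])
  apply ((elim conjE, assumption)+)
  done

lemma ps_zero: "pzero Q \<in> pcarrier Q" using pD(1) .
lemma ps_one: "pone Q \<in> pcarrier Q" "pone Q \<noteq> pzero Q" using pD(2) by simp_all
lemma ps_mult: "x \<in> pcarrier Q \<Longrightarrow> y \<in> pcarrier Q \<Longrightarrow> pmult Q x y \<in> pcarrier Q"
  using pD(3) by blast
lemma ps_assoc: "x \<in> pcarrier Q \<Longrightarrow> y \<in> pcarrier Q \<Longrightarrow> z \<in> pcarrier Q \<Longrightarrow>
   pmult Q (pmult Q x y) z = pmult Q x (pmult Q y z)"
  using pD(4) by blast
lemma ps_comm: "x \<in> pcarrier Q \<Longrightarrow> y \<in> pcarrier Q \<Longrightarrow> pmult Q x y = pmult Q y x"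
  using pD(5) by blast
lemma ps_one_mult: "x \<in> pcarrier Q \<Longrightarrow> pmult Q (pone Q) x = x"
  using pD(6) by blast
lemma ps_zero_mult: "x \<in> pcarrier Q \<Longrightarrow> pmult Q (pzero Q) x = pzero Q"
  using pD(7) by blast
lemma ps_nozd: "x \<in> pcarrier Q \<Longrightarrow> y \<in> pcarrier Q \<Longrightarrow> x \<noteq> pzero Q \<Longrightarrow> y \<noteq> pzero Q \<Longrightarrow>
   pmult Q x y \<noteq> pzero Q"
  using pD(8) by blast
lemma ps_inv: "x \<in> pcarrier Q \<Longrightarrow> x \<noteq> pzero Q \<Longrightarrow>
   \<exists>y. y \<in> pcarrier Q \<and> y \<noteq> pzero Q \<and> pmult Q x y = pone Q"
  using pD(9) by blast
lemma ps_neg: "x \<in> pcarrier Q \<Longrightarrow> pneg Q x \<in> pcarrier Q"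
  "x \<in> pcarrier Q \<Longrightarrow> pneg Q (pneg Q x) = x"
  using pD(10) by blast+
lemma ps_neg_zero: "pneg Q (pzero Q) = pzero Q"
  using pD(11) .
lemma ps_null_sub: "(a, b, c) \<in> pnull Q \<Longrightarrow> a \<in> pcarrier Q \<and> b \<in> pcarrier Q \<and> c \<in> pcarrier Q"
  using pD(12) by blast
lemma ps_null_perm: "(a, b, c) \<in> pnull Q \<Longrightarrow> (b, a, c) \<in> pnull Q"
  "(a, b, c) \<in> pnull Q \<Longrightarrow> (a, c, b) \<in> pnull Q"
  using pD(13) by blast+
lemma ps_null_mult: "(a, b, c) \<in> pnull Q \<Longrightarrow> d \<in> pcarrier Q \<Longrightarrow>
   (pmult Q d a, pmult Q d b, pmult Q d c) \<in> pnull Q"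
  using pD(14) by blast
lemma ps_null_zero: "a \<in> pcarrier Q \<Longrightarrow> b \<in> pcarrier Q \<Longrightarrow>
   (a, b, pzero Q) \<in> pnull Q \<longleftrightarrow> a = pneg Q b"
  using pD(15) by blast

lemma ps_mult_zero: "x \<in> pcarrier Q \<Longrightarrow> pmult Q x (pzero Q) = pzero Q"
  using ps_comm ps_zero ps_zero_mult by metis

lemma ps_mult_one: "x \<in> pcarrier Q \<Longrightarrow> pmult Q x (pone Q) = x"
  using ps_comm ps_one ps_one_mult by metis

lemma ps_mult_neg: assumes "d \<in> pcarrier Q" "b \<in> pcarrier Q"
  shows "pmult Q d (pneg Q b) = pneg Q (pmult Q d b)"
proof -
  have "(pneg Q b, b, pzero Q) \<in> pnull Q" using ps_null_zero ps_neg assms by blast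
  from ps_null_mult[OF this assms(1)]
  have "(pmult Q d (pneg Q b), pmult Q d b, pzero Q) \<in> pnull Q"
    using ps_mult_zero assms by simp
  then show ?thesis using ps_null_zero ps_mult ps_neg assms by blast
qed

lemma ps_neg_nz: "x \<in> pcarrier Q \<Longrightarrow> x \<noteq> pzero Q \<Longrightarrow> pneg Q x \<noteq> pzero Q"
  using ps_neg ps_neg_zero by metis

end

section \<open>Families\<close>

definition cp_flip :: "('i \<Rightarrow> 'a pasture) \<Rightarrow> 'i \<Rightarrow> ('i \<Rightarrow> 'a) \<Rightarrow> ('i \<Rightarrow> 'a)" where
  "cp_flip P j x = x(j := pneg (P j) (x j))"

definition cp_mul :: "'i set \<Rightarrow> ('i \<Rightarrow> 'a pasture) \<Rightarrow> ('i \<Rightarrow> 'a) \<Rightarrow> ('i \<Rightarrow> 'a) \<Rightarrow> ('i \<Rightarrow> 'a)" where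
  "cp_mul I P x y = (\<lambda>i. if i \<in> I then pmult (P i) (x i) (y i) else undefined)"

definition cp_inv :: "'i set \<Rightarrow> ('i \<Rightarrow> 'a pasture) \<Rightarrow> ('i \<Rightarrow> 'a) \<Rightarrow> ('i \<Rightarrow> 'a)" where
  "cp_inv I P x = (\<lambda>i. if i \<in> I then (SOME y. y \<in> pcarrier (P i) \<and> y \<noteq> pzero (P i) \<and>
       pmult (P i) (x i) y = pone (P i)) else undefined)"

definition cp_flip0 :: "'i set \<Rightarrow> ('i \<Rightarrow> 'a pasture) \<Rightarrow> ('i \<Rightarrow> 'a) \<Rightarrow> ('i \<Rightarrow> 'a)" where
  "cp_flip0 I P x = (if I = {} then x else cp_flip P (SOME j. j \<in> I) x)"

definition cp_e :: "'i set \<Rightarrow> ('i \<Rightarrow> 'a pasture) \<Rightarrow> 'i \<Rightarrow> 'a \<Rightarrow> ('i \<Rightarrow> 'a)" where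
  "cp_e I P j x = (\<lambda>i. if i = j then x else if i \<in> I then pone (P i) else undefined)"

locale cpl =
  fixes I :: "'i set" and P :: "'i \<Rightarrow> 'a pasture"
  assumes pas: "\<forall>i\<in>I. pasture (P i)"
begin

abbreviation "F \<equiv> cp_fams I P"
abbreviation "R \<equiv> cp_rel I P"
abbreviation "cl \<equiv> cp_class I P"
abbreviation "mul \<equiv> cp_mul I P"
abbreviation "inv_f \<equiv> cp_inv I P"
abbreviation "flip0 \<equiv> cp_flip0 I P"
abbreviation "ones \<equiv> (\<lambda>i. if i \<in> I then pone (P i) else undefined)"

lemma pasi: "i \<in> I \<Longrightarrow> pasture (P i)" using pas by blast

lemma F_D: assumes "x \<in> F"
  shows "i \<in> I \<Longrightarrow> x i \<in> pcarrier (P i)" "i \<in> I \<Longrightarrow> x i \<noteq> pzero (P i)"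
    "i \<notin> I \<Longrightarrow> x i = undefined" "finite {i\<in>I. x i \<noteq> pone (P i)}"
  using assms unfolding cp_fams_def by auto

lemma F_I: assumes "\<And>i. i \<in> I \<Longrightarrow> x i \<in> pcarrier (P i)" "\<And>i. i \<in> I \<Longrightarrow> x i \<noteq> pzero (P i)"
    "\<And>i. i \<notin> I \<Longrightarrow> x i = undefined" "finite {i\<in>I. x i \<noteq> pone (P i)}"
  shows "x \<in> F"
  using assms unfolding cp_fams_def by auto

lemma R_refl: "R x x"
  unfolding cp_rel_def by (rule exI[of _ "{}"]) auto

lemma R_sym: assumes "y \<in> F" "R x y" shows "R y x"
proof -
  obtain S where S: "S \<subseteq> I" "finite S" "even (card S)" "\<forall>i\<in>S. x i = pneg (P i) (y i)"
    "\<forall>i\<in>I - S. x i = y i" using assms(2) unfolding cp_rel_def by blast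
  have "\<forall>i\<in>S. y i = pneg (P i) (x i)"
    using S(1,4) F_D(1)[OF assms(1)] ps_neg(2)[OF pasi] by (metis subsetD)
  then show ?thesis unfolding cp_rel_def using S by metis
qed

lemma R_trans: assumes "z \<in> F" "R x y" "R y z" shows "R x z"
proof -
  obtain S where S: "S \<subseteq> I" "finite S" "even (card S)" "\<forall>i\<in>S. x i = pneg (P i) (y i)"
    "\<forall>i\<in>I - S. x i = y i" using assms(2) unfolding cp_rel_def by blast
  obtain T where T: "T \<subseteq> I" "finite T" "even (card T)" "\<forall>i\<in>T. y i = pneg (P i) (z i)"
    "\<forall>i\<in>I - T. y i = z i" using assms(3) unfolding cp_rel_def by blast
  define U where "U = (S - T) \<union> (T - S)"
  have fU: "finite U" using S T U_def by auto
  have c1: "card S + card T = card (S \<union> T) + card (S \<inter> T)"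
    using card_Un_Int S(2) T(2) by blast
  have "S \<union> T = U \<union> (S \<inter> T)" "U \<inter> (S \<inter> T) = {}" unfolding U_def by auto
  then have c2: "card (S \<union> T) = card U + card (S \<inter> T)"
    using card_Un_disjoint fU S(2) T(2) by (metis finite_Int)
  have c3: "card S + card T = card U + 2 * card (S \<inter> T)" using c1 c2 by simp
  have "even (card S + card T)" using S(3) T(3) by simp
  then have "even (card U + 2 * card (S \<inter> T))" using c3 by metis
  then have "even (card U)" by simp
  moreover have "U \<subseteq> I" using S T U_def by auto
  moreover have "\<forall>i\<in>U. x i = pneg (P i) (z i)" using S T unfolding U_def by auto
  moreover have "\<forall>i\<in>I - U. x i = z i"
  proof
    fix i assume i: "i \<in> I - U"
    show "x i = z i"
    proof (cases "i \<in> S")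
      case True
      then have "i \<in> T" using i U_def by auto
      then show ?thesis using S T True i F_D(1)[OF assms(1)] ps_neg(2)[OF pasi] by auto
    next
      case False
      then have "i \<notin> T" using i U_def by auto
      then show ?thesis using S T False i by auto
    qed
  qed
  ultimately show ?thesis unfolding cp_rel_def using fU by blast
qed

lemma class_mem: "x \<in> F \<Longrightarrow> x \<in> cl x"
  unfolding cp_class_def using R_refl by blast

lemma class_ne: "x \<in> F \<Longrightarrow> cl x \<noteq> {}"
  using class_mem by blast

lemma class_sub: "cl x \<subseteq> F" unfolding cp_class_def by blast

lemma class_eq: assumes "x \<in> F" "y \<in> F" shows "cl x = cl y \<longleftrightarrow> R x y"
proof
  assume "cl x = cl y" then have "x \<in> cl y" using class_mem assms by blast
  then show "R x y" unfolding cp_class_def by blast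
next
  assume r: "R x y"
  have "R z y" if "R z x" "z \<in> F" for z using R_trans[OF assms(2) that(1) r] .
  moreover have "R z x" if "R z y" "z \<in> F" for z using R_trans[OF assms(1) that(1) R_sym[OF assms(2) r]] .
  ultimately show "cl x = cl y" unfolding cp_class_def by blast
qed

lemma class_memD: assumes "x \<in> F" "y \<in> cl x" shows "y \<in> F" "cl y = cl x"
proof -
  show y: "y \<in> F" using assms class_sub by blast
  have "R y x" using assms(2) unfolding cp_class_def by blast
  then show "cl y = cl x" using class_eq[OF y assms(1)] by blast
qed

lemma rep_in: assumes "x \<in> F" shows "cp_rep (cl x) \<in> cl x"
  unfolding cp_rep_def using class_mem[OF assms] by (metis someI)

lemma rep_F: "x \<in> F \<Longrightarrow> cp_rep (cl x) \<in> F" using rep_in class_sub by blast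

lemma cl_rep: "x \<in> F \<Longrightarrow> cl (cp_rep (cl x)) = cl x" using rep_in class_memD by blast

lemma R_rep: "x \<in> F \<Longrightarrow> R (cp_rep (cl x)) x" using rep_in unfolding cp_class_def by blast


lemma mul_F: assumes "x \<in> F" "y \<in> F" shows "mul x y \<in> F"
proof (rule F_I)
  fix i assume i: "i \<in> I"
  show "mul x y i \<in> pcarrier (P i)" using i F_D[OF assms(1)] F_D[OF assms(2)] ps_mult[OF pasi[OF i]]
    unfolding cp_mul_def by simp
  show "mul x y i \<noteq> pzero (P i)" using i F_D[OF assms(1)] F_D[OF assms(2)] ps_nozd[OF pasi[OF i]]
    unfolding cp_mul_def by simp
next
  fix i assume "i \<notin> I" then show "mul x y i = undefined" unfolding cp_mul_def by simp
next
  have "{i\<in>I. mul x y i \<noteq> pone (P i)} \<subseteq> {i\<in>I. x i \<noteq> pone (P i)} \<union> {i\<in>I. y i \<noteq> pone (P i)}"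
    using ps_one_mult[OF pasi] ps_one[OF pasi] unfolding cp_mul_def by force
  then show "finite {i\<in>I. mul x y i \<noteq> pone (P i)}"
    using F_D(4)[OF assms(1)] F_D(4)[OF assms(2)] by (meson finite_UnI finite_subset)
qed

lemma mul_comm: assumes "x \<in> F" "y \<in> F" shows "mul x y = mul y x"
  unfolding cp_mul_def using F_D[OF assms(1)] F_D[OF assms(2)] ps_comm[OF pasi] by auto

lemma mul_assoc: assumes "x \<in> F" "y \<in> F" "z \<in> F" shows "mul (mul x y) z = mul x (mul y z)"
  unfolding cp_mul_def using F_D[OF assms(1)] F_D[OF assms(2)] F_D[OF assms(3)] ps_assoc[OF pasi] by auto

lemma ones_F: "ones \<in> F"
  by (rule F_I) (auto simp: ps_one[OF pasi])

lemma mul_ones: assumes "x \<in> F" shows "mul ones x = x"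
  unfolding cp_mul_def using F_D[OF assms] ps_one_mult[OF pasi] by auto

lemma mul_R: assumes "x \<in> F" "x' \<in> F" "y \<in> F" "R x x'" shows "R (mul x y) (mul x' y)"
proof -
  obtain S where S: "S \<subseteq> I" "finite S" "even (card S)" "\<forall>i\<in>S. x i = pneg (P i) (x' i)"
    "\<forall>i\<in>I - S. x i = x' i" using assms(4) unfolding cp_rel_def by blast
  have "\<forall>i\<in>S. mul x y i = pneg (P i) (mul x' y i)"
  proof
    fix i assume i: "i \<in> S"
    then have iI: "i \<in> I" using S by blast
    have "mul x y i = pmult (P i) (y i) (x i)"
      using iI ps_comm[OF pasi[OF iI] F_D(1)[OF assms(1) iI] F_D(1)[OF assms(3) iI]] unfolding cp_mul_def by simp
    also have "\<dots> = pmult (P i) (y i) (pneg (P i) (x' i))" using S(4) i by simp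
    also have "\<dots> = pneg (P i) (pmult (P i) (y i) (x' i))"
      using ps_mult_neg[OF pasi[OF iI]] F_D[OF assms(2)] F_D[OF assms(3)] iI by simp
    also have "\<dots> = pneg (P i) (mul x' y i)"
      using iI ps_comm[OF pasi[OF iI]] F_D[OF assms(2)] F_D[OF assms(3)] unfolding cp_mul_def by simp
    finally show "mul x y i = pneg (P i) (mul x' y i)" .
  qed
  moreover have "\<forall>i\<in>I - S. mul x y i = mul x' y i" using S(5) unfolding cp_mul_def by simp
  ultimately show ?thesis unfolding cp_rel_def using S(1-3) by blast
qed

lemma mul_R2: assumes "x \<in> F" "x' \<in> F" "y \<in> F" "y' \<in> F" "R x x'" "R y y'"
  shows "R (mul x y) (mul x' y')"
proof -
  have 1: "R (mul x y) (mul x' y)" using mul_R assms by blast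
  have "R (mul y x') (mul y' x')" using mul_R assms by blast
  then have 2: "R (mul x' y) (mul x' y')" using mul_comm assms by metis
  show ?thesis using R_trans[OF mul_F[OF assms(2,4)] 1 2] .
qed

lemma inv_f_prop: assumes "x \<in> F" "i \<in> I"
  shows "inv_f x i \<in> pcarrier (P i) \<and> inv_f x i \<noteq> pzero (P i) \<and> pmult (P i) (x i) (inv_f x i) = pone (P i)"
proof -
  have "\<exists>y. y \<in> pcarrier (P i) \<and> y \<noteq> pzero (P i) \<and> pmult (P i) (x i) y = pone (P i)"
    using ps_inv[OF pasi[OF assms(2)]] F_D[OF assms(1)] assms(2) by blast
  from someI_ex[OF this] show ?thesis unfolding cp_inv_def using assms(2) by simp
qed

lemma inv_f_F: assumes "x \<in> F" shows "inv_f x \<in> F"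
proof (rule F_I)
  show "\<And>i. i \<in> I \<Longrightarrow> inv_f x i \<in> pcarrier (P i)" "\<And>i. i \<in> I \<Longrightarrow> inv_f x i \<noteq> pzero (P i)"
    using inv_f_prop[OF assms] by blast+
  show "\<And>i. i \<notin> I \<Longrightarrow> inv_f x i = undefined" unfolding cp_inv_def by simp
  have "{i\<in>I. inv_f x i \<noteq> pone (P i)} \<subseteq> {i\<in>I. x i \<noteq> pone (P i)}"
  proof clarify
    fix i assume i: "i \<in> I" "inv_f x i \<noteq> pone (P i)" "x i = pone (P i)"
    then have "pmult (P i) (pone (P i)) (inv_f x i) = pone (P i)" using inv_f_prop[OF assms i(1)] by simp
    then show False using i ps_one_mult[OF pasi[OF i(1)]] inv_f_prop[OF assms i(1)] by simp
  qed
  then show "finite {i\<in>I. inv_f x i \<noteq> pone (P i)}" using F_D(4)[OF assms] finite_subset by blast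
qed

lemma mul_inv: assumes "x \<in> F" shows "mul x (inv_f x) = ones"
  unfolding cp_mul_def using inv_f_prop[OF assms] by auto

lemma flip_F: assumes "x \<in> F" "j \<in> I" shows "cp_flip P j x \<in> F"
proof (rule F_I)
  fix i assume i: "i \<in> I"
  show "cp_flip P j x i \<in> pcarrier (P i)" using F_D[OF assms(1)] i ps_neg[OF pasi[OF i]]
    unfolding cp_flip_def by (cases "i = j") auto
  show "cp_flip P j x i \<noteq> pzero (P i)" using F_D[OF assms(1)] i ps_neg_nz[OF pasi[OF i]]
    unfolding cp_flip_def by (cases "i = j") auto
next
  fix i assume "i \<notin> I" then show "cp_flip P j x i = undefined"
    using assms F_D[OF assms(1)] unfolding cp_flip_def by auto
next
  have "{i\<in>I. cp_flip P j x i \<noteq> pone (P i)} \<subseteq> insert j {i\<in>I. x i \<noteq> pone (P i)}"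
    unfolding cp_flip_def by auto
  then show "finite {i\<in>I. cp_flip P j x i \<noteq> pone (P i)}" using F_D(4)[OF assms(1)]
    by (meson finite_insert finite_subset)
qed

lemma flip_R: assumes "R x y" shows "R (cp_flip P j x) (cp_flip P j y)"
proof -
  obtain S where S: "S \<subseteq> I" "finite S" "even (card S)" "\<forall>i\<in>S. x i = pneg (P i) (y i)"
    "\<forall>i\<in>I - S. x i = y i" using assms unfolding cp_rel_def by blast
  have "\<forall>i\<in>S. cp_flip P j x i = pneg (P i) (cp_flip P j y i)" using S(4) unfolding cp_flip_def by simp
  moreover have "\<forall>i\<in>I - S. cp_flip P j x i = cp_flip P j y i" using S(5) unfolding cp_flip_def by simp
  ultimately show ?thesis unfolding cp_rel_def using S(1-3) by blast
qed

lemma flip_flip: assumes "x \<in> F" "j \<in> I" shows "cp_flip P j (cp_flip P j x) = x"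
  unfolding cp_flip_def using F_D(1)[OF assms(1) assms(2)] ps_neg(2)[OF pasi[OF assms(2)]] by auto

lemma mul_flip: assumes "w \<in> F" "x \<in> F" "j \<in> I" shows "mul w (cp_flip P j x) = cp_flip P j (mul w x)"
  unfolding cp_mul_def cp_flip_def using assms F_D[OF assms(1)] F_D[OF assms(2)]
    ps_mult_neg[OF pasi[OF assms(3)]] by auto

lemma j0_in: "I \<noteq> {} \<Longrightarrow> (SOME j. j \<in> I) \<in> I" by (simp add: some_in_eq)

lemma flip0_e: "I = {} \<Longrightarrow> flip0 x = x" "I \<noteq> {} \<Longrightarrow> flip0 x = cp_flip P (SOME j. j \<in> I) x"
  unfolding cp_flip0_def by (rule if_P, assumption) (rule if_not_P, assumption)

lemma flip0_F: assumes "x \<in> F" shows "flip0 x \<in> F"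
proof (cases "I = {}")
  case True show ?thesis unfolding flip0_e(1)[OF True] by (rule assms)
next
  case False show ?thesis unfolding flip0_e(2)[OF False] by (rule flip_F[OF assms j0_in[OF False]])
qed

lemma flip0_R: assumes "R x y" shows "R (flip0 x) (flip0 y)"
proof (cases "I = {}")
  case True show ?thesis unfolding flip0_e(1)[OF True] by (rule assms)
next
  case False show ?thesis unfolding flip0_e(2)[OF False] by (rule flip_R[OF assms])
qed

lemma flip0_flip0: assumes "x \<in> F" shows "flip0 (flip0 x) = x"
proof (cases "I = {}")
  case True show ?thesis unfolding flip0_e(1)[OF True] by (rule refl)
next
  case False show ?thesis unfolding flip0_e(2)[OF False] by (rule flip_flip[OF assms j0_in[OF False]])
qed

lemma mul_flip0: assumes "w \<in> F" "x \<in> F" shows "mul w (flip0 x) = flip0 (mul w x)"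
proof (cases "I = {}")
  case True show ?thesis unfolding flip0_e(1)[OF True] by (rule refl)
next
  case False show ?thesis unfolding flip0_e(2)[OF False] by (rule mul_flip[OF assms j0_in[OF False]])
qed

abbreviation "Cp \<equiv> coprod I P"
abbreviation "N \<equiv> pneg (coprod I P)"

lemma carrC: "pcarrier Cp = {{}} \<union> cl ` F" by (simp add: coprod_def)
lemma zeroC: "pzero Cp = {}" by (simp add: coprod_def)
lemma oneC: "pone Cp = cl ones" by (simp add: coprod_def)
lemma multC0: "pmult Cp {} B = {}" "pmult Cp A {} = {}" by (simp_all add: coprod_def)

lemma carrE: assumes "A \<in> pcarrier Cp" obtains "A = {}" | a where "a \<in> F" "A = cl a"
  using assms carrC by blast

lemma clC: "a \<in> F \<Longrightarrow> cl a \<in> pcarrier Cp" using carrC by blast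

lemma multC: assumes "a \<in> F" "b \<in> F" shows "pmult Cp (cl a) (cl b) = cl (mul a b)"
proof -
  have "pmult Cp (cl a) (cl b) = cl (mul (cp_rep (cl a)) (cp_rep (cl b)))"
    using class_ne[OF assms(1)] class_ne[OF assms(2)] by (simp add: coprod_def cp_mul_def)
  also have "\<dots> = cl (mul a b)"
    using class_eq[OF mul_F[OF rep_F[OF assms(1)] rep_F[OF assms(2)]] mul_F[OF assms]]
      mul_R2[OF rep_F[OF assms(1)] assms(1) rep_F[OF assms(2)] assms(2) R_rep[OF assms(1)] R_rep[OF assms(2)]]
    by blast
  finally show ?thesis .
qed

lemma negC0: "N {} = {}" by (simp add: coprod_def)

lemma negC_gen: "N A = (if A = {} then {} else if I = {} then A else cl (cp_flip P (SOME j. j \<in> I) (cp_rep A)))"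
  by (simp add: coprod_def Let_def cp_flip_def)

lemma negC: assumes "a \<in> F" shows "N (cl a) = cl (flip0 a)"
proof -
  have "N (cl a) = cl (flip0 (cp_rep (cl a)))"
  proof (cases "I = {}")
    case True
    then show ?thesis unfolding negC_gen flip0_e(1)[OF True] using cl_rep[OF assms] by simp
  next
    case False
    then show ?thesis unfolding negC_gen flip0_e(2)[OF False] using class_ne[OF assms] by simp
  qed
  also have "\<dots> = cl (flip0 a)"
    using class_eq[OF flip0_F[OF rep_F[OF assms]] flip0_F[OF assms]] flip0_R[OF R_rep[OF assms]] by blast
  finally show ?thesis .
qed

lemma nullC: "(A, B, D) \<in> pnull Cp \<longleftrightarrow>
   (A \<in> cl ` F \<and> B \<in> cl ` F \<and> D \<in> cl ` F \<and>
     (\<exists>x\<in>A. \<exists>y\<in>B. \<exists>z\<in>D. \<exists>j\<in>I. (x j, y j, z j) \<in> pnull (P j) \<and>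
        (\<forall>i\<in>I - {j}. x i = y i \<and> y i = z i))) \<or>
   (A \<in> pcarrier Cp \<and> B \<in> pcarrier Cp \<and> D \<in> pcarrier Cp \<and>
     (D = {} \<and> A = N B \<or> B = {} \<and> A = N D \<or> A = {} \<and> B = N D))"
  unfolding negC_gen by (simp add: coprod_def Let_def cp_flip_def)

lemma multC_carr: assumes "A \<in> pcarrier Cp" "B \<in> pcarrier Cp" shows "pmult Cp A B \<in> pcarrier Cp"
proof (cases rule: carrE[OF assms(1)])
  case 1 then show ?thesis using multC0 carrC by simp
next
  case (2 a)
  show ?thesis
  proof (cases rule: carrE[OF assms(2)])
    case 1 then show ?thesis using multC0 carrC by simp
  next
    case (2 b) then show ?thesis using \<open>a \<in> F\<close> \<open>A = cl a\<close> multC clC mul_F by simp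
  qed
qed

lemma negC_carr: assumes "A \<in> pcarrier Cp" shows "N A \<in> pcarrier Cp"
  using assms by (cases rule: carrE) (simp_all add: negC0 carrC negC clC flip0_F)

lemma negC_negC: assumes "A \<in> pcarrier Cp" shows "N (N A) = A"
  using assms by (cases rule: carrE) (simp_all add: negC0 negC flip0_F flip0_flip0)

lemma assocC: assumes "A \<in> pcarrier Cp" "B \<in> pcarrier Cp" "D \<in> pcarrier Cp"
  shows "pmult Cp (pmult Cp A B) D = pmult Cp A (pmult Cp B D)"
proof -
  consider "A = {}" | "B = {}" | "D = {}" | a b d where "a \<in> F" "b \<in> F" "d \<in> F" "A = cl a" "B = cl b" "D = cl d"
    using carrE[OF assms(1)] carrE[OF assms(2)] carrE[OF assms(3)] by metis
  then show ?thesis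
  proof cases
    case 4 then show ?thesis using multC mul_F mul_assoc by simp
  qed (simp_all add: multC0)
qed

lemma commC: assumes "A \<in> pcarrier Cp" "B \<in> pcarrier Cp" shows "pmult Cp A B = pmult Cp B A"
proof -
  consider "A = {}" | "B = {}" | a b where "a \<in> F" "b \<in> F" "A = cl a" "B = cl b"
    using carrE[OF assms(1)] carrE[OF assms(2)] by metis
  then show ?thesis
  proof cases
    case 3 then show ?thesis using multC mul_comm by simp
  qed (simp_all add: multC0)
qed

lemma oneC_mult: assumes "A \<in> pcarrier Cp" shows "pmult Cp (pone Cp) A = A"
  using assms by (cases rule: carrE) (simp_all add: multC0 oneC multC ones_F mul_ones)

lemma nozdC: assumes "A \<in> pcarrier Cp - {pzero Cp}" "B \<in> pcarrier Cp - {pzero Cp}"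
  shows "pmult Cp A B \<noteq> pzero Cp"
proof -
  obtain a b where "a \<in> F" "b \<in> F" "A = cl a" "B = cl b"
    using assms carrE zeroC by (metis DiffE insertI1)
  then show ?thesis using multC zeroC class_ne mul_F by simp
qed

lemma invC: assumes "A \<in> pcarrier Cp - {pzero Cp}"
  shows "\<exists>B\<in>pcarrier Cp - {pzero Cp}. pmult Cp A B = pone Cp"
proof -
  obtain a where a: "a \<in> F" "A = cl a"
    using assms carrE zeroC by (metis DiffE insertI1)
  have "cl (inv_f a) \<in> pcarrier Cp - {pzero Cp}" using clC inv_f_F a class_ne zeroC by simp
  moreover have "pmult Cp A (cl (inv_f a)) = pone Cp" using a multC inv_f_F mul_inv oneC by simp
  ultimately show ?thesis by blast
qed

lemma clF_carr: "cl ` F \<subseteq> pcarrier Cp" using carrC by blast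

lemma empty_not_cl: "{} \<notin> cl ` F" using class_ne by blast

lemma null_sub: assumes "(A, B, D) \<in> pnull Cp"
  shows "A \<in> pcarrier Cp \<and> B \<in> pcarrier Cp \<and> D \<in> pcarrier Cp"
  using assms clF_carr unfolding nullC by blast

lemma null_cases:
  assumes "(A, B, D) \<in> pnull Cp"
  obtains (a) x y z j where "A \<in> cl ` F" "B \<in> cl ` F" "D \<in> cl ` F" "x \<in> A" "y \<in> B" "z \<in> D" "j \<in> I"
     "(x j, y j, z j) \<in> pnull (P j)" "\<forall>i\<in>I - {j}. x i = y i \<and> y i = z i"
  | (b) "A \<in> pcarrier Cp" "B \<in> pcarrier Cp" "D \<in> pcarrier Cp"
     "D = {} \<and> A = N B \<or> B = {} \<and> A = N D \<or> A = {} \<and> B = N D"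
  using assms unfolding nullC by blast

lemma null_perm1: assumes "(A, B, D) \<in> pnull Cp" shows "(B, A, D) \<in> pnull Cp"
  using assms
proof (cases rule: null_cases)
  case (a x y z j)
  have "(y j, x j, z j) \<in> pnull (P j)" using ps_null_perm(1)[OF pasi[OF a(7)] a(8)] .
  moreover have "\<forall>i\<in>I - {j}. y i = x i \<and> x i = z i" using a(9) by auto
  ultimately show ?thesis unfolding nullC using a(1-7) by blast
next
  case b
  show ?thesis unfolding nullC using b(4) negC_negC[OF b(1)] negC_negC[OF b(2)] negC_negC[OF b(3)] b(1-3)
    by auto
qed

lemma null_perm2: assumes "(A, B, D) \<in> pnull Cp" shows "(A, D, B) \<in> pnull Cp"
  using assms
proof (cases rule: null_cases)
  case (a x y z j)
  have "(x j, z j, y j) \<in> pnull (P j)" using ps_null_perm(2)[OF pasi[OF a(7)] a(8)] .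
  moreover have "\<forall>i\<in>I - {j}. x i = z i \<and> z i = y i" using a(9) by auto
  ultimately show ?thesis unfolding nullC using a(1-7) by blast
next
  case b
  show ?thesis unfolding nullC using b(4) negC_negC[OF b(1)] negC_negC[OF b(2)] negC_negC[OF b(3)] b(1-3)
    by auto
qed

lemma mult_negC: assumes "E \<in> pcarrier Cp" "B \<in> pcarrier Cp"
  shows "pmult Cp E (N B) = N (pmult Cp E B)"
proof -
  consider "E = {}" | "B = {}" | w b where "w \<in> F" "b \<in> F" "E = cl w" "B = cl b"
    using carrE[OF assms(1)] carrE[OF assms(2)] by metis
  then show ?thesis
  proof cases
    case 3 then show ?thesis using multC mul_F negC flip0_F mul_flip0 by simp
  qed (simp_all add: multC0 negC0)
qed

lemma null_mult: assumes "(A, B, D) \<in> pnull Cp" "E \<in> pcarrier Cp"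
  shows "(pmult Cp E A, pmult Cp E B, pmult Cp E D) \<in> pnull Cp"
proof (cases rule: carrE[OF assms(2)])
  case 1
  show ?thesis unfolding 1 multC0 nullC using negC0 carrC by simp
next
  case (2 w)
  show ?thesis using assms(1)
  proof (cases rule: null_cases)
    case (a x y z j)
    have xF: "x \<in> F" "y \<in> F" "z \<in> F" using a(1-6) class_sub by blast+
    have "A = cl x" "B = cl y" "D = cl z" using a(1-6) class_memD by blast+
    then have e: "pmult Cp E A = cl (mul w x)" "pmult Cp E B = cl (mul w y)" "pmult Cp E D = cl (mul w z)"
      using 2 multC xF by simp_all
    have "(mul w x j, mul w y j, mul w z j) \<in> pnull (P j)"
      using ps_null_mult[OF pasi[OF a(7)] a(8) F_D(1)[OF 2(1) a(7)]] a(7) unfolding cp_mul_def by simp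
    moreover have "\<forall>i\<in>I - {j}. mul w x i = mul w y i \<and> mul w y i = mul w z i"
      using a(9) unfolding cp_mul_def by simp
    moreover have "mul w x \<in> cl (mul w x)" "mul w y \<in> cl (mul w y)" "mul w z \<in> cl (mul w z)"
      using class_mem mul_F xF 2(1) by blast+
    moreover have "cl (mul w x) \<in> cl ` F" "cl (mul w y) \<in> cl ` F" "cl (mul w z) \<in> cl ` F"
      using mul_F xF 2(1) by blast+
    ultimately show ?thesis unfolding e nullC using a(7) by blast
  next
    case b
    have c: "pmult Cp E A \<in> pcarrier Cp" "pmult Cp E B \<in> pcarrier Cp" "pmult Cp E D \<in> pcarrier Cp"
      using multC_carr assms(2) b(1-3) by blast+
    show ?thesis unfolding nullC using c b(4) mult_negC[OF assms(2)] b(1-3) multC0 by auto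
  qed
qed

lemma null_zero: assumes "A \<in> pcarrier Cp" "B \<in> pcarrier Cp"
  shows "(A, B, pzero Cp) \<in> pnull Cp \<longleftrightarrow> A = N B"
proof
  assume h: "(A, B, pzero Cp) \<in> pnull Cp"
  then show "A = N B"
  proof (cases rule: null_cases)
    case a then show ?thesis using empty_not_cl zeroC by simp
  next
    case b then show ?thesis using zeroC negC0 by auto
  qed
next
  assume "A = N B"
  then show "(A, B, pzero Cp) \<in> pnull Cp" unfolding nullC zeroC using assms carrC by simp
qed

lemma pasture_Cp: "pasture Cp"
  unfolding pasture_def
proof (intro conjI ballI allI impI)
  show "pzero Cp \<in> pcarrier Cp" using zeroC carrC by simp
  show "pone Cp \<in> pcarrier Cp - {pzero Cp}" using oneC zeroC clC ones_F class_ne by simp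
  show "\<And>x y. x \<in> pcarrier Cp \<Longrightarrow> y \<in> pcarrier Cp \<Longrightarrow> pmult Cp x y \<in> pcarrier Cp" using multC_carr .
  show "\<And>x y z. x \<in> pcarrier Cp \<Longrightarrow> y \<in> pcarrier Cp \<Longrightarrow> z \<in> pcarrier Cp \<Longrightarrow>
     pmult Cp (pmult Cp x y) z = pmult Cp x (pmult Cp y z)" using assocC .
  show "\<And>x y. x \<in> pcarrier Cp \<Longrightarrow> y \<in> pcarrier Cp \<Longrightarrow> pmult Cp x y = pmult Cp y x" using commC .
  show "\<And>x. x \<in> pcarrier Cp \<Longrightarrow> pmult Cp (pone Cp) x = x" using oneC_mult .
  show "\<And>x. x \<in> pcarrier Cp \<Longrightarrow> pmult Cp (pzero Cp) x = pzero Cp" using multC0 zeroC by simp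
  show "\<And>x y. x \<in> pcarrier Cp - {pzero Cp} \<Longrightarrow> y \<in> pcarrier Cp - {pzero Cp} \<Longrightarrow>
     pmult Cp x y \<noteq> pzero Cp" using nozdC .
  show "\<And>x. x \<in> pcarrier Cp - {pzero Cp} \<Longrightarrow> \<exists>y\<in>pcarrier Cp - {pzero Cp}. pmult Cp x y = pone Cp"
    using invC .
  show "\<And>x. x \<in> pcarrier Cp \<Longrightarrow> N x \<in> pcarrier Cp" using negC_carr .
  show "\<And>x. x \<in> pcarrier Cp \<Longrightarrow> N (N x) = x" using negC_negC .
  show "N (pzero Cp) = pzero Cp" using negC0 zeroC by simp
  show "pnull Cp \<subseteq> pcarrier Cp \<times> pcarrier Cp \<times> pcarrier Cp" using null_sub by auto
  show "\<And>a b c. (a, b, c) \<in> pnull Cp \<Longrightarrow> (b, a, c) \<in> pnull Cp" using null_perm1 .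
  show "\<And>a b c. (a, b, c) \<in> pnull Cp \<Longrightarrow> (a, c, b) \<in> pnull Cp" using null_perm2 .
  show "\<And>a b c d. (a, b, c) \<in> pnull Cp \<Longrightarrow> d \<in> pcarrier Cp \<Longrightarrow>
     (pmult Cp d a, pmult Cp d b, pmult Cp d c) \<in> pnull Cp" using null_mult .
  show "\<And>a b. a \<in> pcarrier Cp \<Longrightarrow> b \<in> pcarrier Cp \<Longrightarrow> (a, b, pzero Cp) \<in> pnull Cp \<longleftrightarrow> a = N b"
    using null_zero .
qed

lemma inj_eq: "cp_inj I P j x = (if x = pzero (P j) then {} else cl (cp_e I P j x))"
  unfolding cp_inj_def cp_e_def by simp

context
  fixes j assumes j: "j \<in> I"
begin

abbreviation "e \<equiv> cp_e I P j"
abbreviation "Pj \<equiv> P j"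

lemma pj: "pasture Pj" using pasi[OF j] .

lemma e_F: assumes "x \<in> pcarrier Pj" "x \<noteq> pzero Pj" shows "e x \<in> F"
proof (rule F_I)
  show "\<And>i. i \<in> I \<Longrightarrow> e x i \<in> pcarrier (P i)" using assms ps_one[OF pasi] unfolding cp_e_def by auto
  show "\<And>i. i \<in> I \<Longrightarrow> e x i \<noteq> pzero (P i)" using assms ps_one[OF pasi] unfolding cp_e_def by auto
  show "\<And>i. i \<notin> I \<Longrightarrow> e x i = undefined" using j unfolding cp_e_def by auto
  have "{i\<in>I. e x i \<noteq> pone (P i)} \<subseteq> {j}" unfolding cp_e_def by auto
  then show "finite {i\<in>I. e x i \<noteq> pone (P i)}" using finite_subset by blast
qed

lemma e_one: "e (pone Pj) = ones" unfolding cp_e_def using j by auto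

lemma e_mul: assumes "x \<in> pcarrier Pj" "y \<in> pcarrier Pj" shows "mul (e x) (e y) = e (pmult Pj x y)"
  unfolding cp_e_def cp_mul_def using j ps_one_mult[OF pasi] ps_one[OF pasi] by auto

lemma e_neg: assumes "x \<in> pcarrier Pj" "x \<noteq> pzero Pj" shows "R (flip0 (e x)) (e (pneg Pj x))"
proof -
  have In: "I \<noteq> {}" using j by blast
  define k where "k = (SOME j. j \<in> I)"
  have k: "k \<in> I" using j0_in[OF In] k_def by simp
  have f: "flip0 (e x) = cp_flip P k (e x)" using flip0_e(2)[OF In] k_def by simp
  show ?thesis
  proof (cases "k = j")
    case True
    have "cp_flip P k (e x) = e (pneg Pj x)" unfolding True cp_flip_def cp_e_def by auto
    then show ?thesis using f R_refl by simp
  next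
    case False
    have "\<forall>i\<in>{j, k}. cp_flip P k (e x) i = pneg (P i) (e (pneg Pj x) i)"
      using False ps_neg(2)[OF pj assms(1)] unfolding cp_flip_def cp_e_def by auto
    moreover have "\<forall>i\<in>I - {j, k}. cp_flip P k (e x) i = e (pneg Pj x) i"
      unfolding cp_flip_def cp_e_def by auto
    moreover have "{j, k} \<subseteq> I" "finite {j, k}" "even (card {j, k})" using j k False by auto
    ultimately show ?thesis unfolding f cp_rel_def by blast
  qed
qed

lemma inj_carr: "x \<in> pcarrier Pj \<Longrightarrow> cp_inj I P j x \<in> pcarrier Cp"
  unfolding inj_eq using carrC e_F clC by auto

lemma inj_neg: assumes "x \<in> pcarrier Pj" shows "cp_inj I P j (pneg Pj x) = N (cp_inj I P j x)"
proof (cases "x = pzero Pj")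
  case True then show ?thesis unfolding inj_eq using ps_neg_zero[OF pj] negC0 by simp
next
  case False
  have nz: "pneg Pj x \<noteq> pzero Pj" using ps_neg_nz[OF pj assms False] .
  have "cl (flip0 (e x)) = cl (e (pneg Pj x))"
    using class_eq[OF flip0_F[OF e_F[OF assms False]] e_F[OF ps_neg(1)[OF pj assms] nz]] e_neg[OF assms False]
    by blast
  then show ?thesis unfolding inj_eq using False nz negC[OF e_F[OF assms False]] by simp
qed

lemma inj_mult: assumes "x \<in> pcarrier Pj" "y \<in> pcarrier Pj"
  shows "cp_inj I P j (pmult Pj x y) = pmult Cp (cp_inj I P j x) (cp_inj I P j y)"
proof (cases "x = pzero Pj \<or> y = pzero Pj")
  case True
  then have "pmult Pj x y = pzero Pj" using ps_zero_mult[OF pj] ps_mult_zero[OF pj] assms by auto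
  then show ?thesis unfolding inj_eq using True multC0 by auto
next
  case False
  then have nz: "pmult Pj x y \<noteq> pzero Pj" using ps_nozd[OF pj assms] by blast
  show ?thesis unfolding inj_eq using False nz multC e_F assms e_mul by simp
qed

lemma inj_null: assumes "(a, b, c) \<in> pnull Pj"
  shows "(cp_inj I P j a, cp_inj I P j b, cp_inj I P j c) \<in> pnull Cp"
proof -
  have abc: "a \<in> pcarrier Pj" "b \<in> pcarrier Pj" "c \<in> pcarrier Pj" using ps_null_sub[OF pj assms] by blast+
  have car: "cp_inj I P j a \<in> pcarrier Cp" "cp_inj I P j b \<in> pcarrier Cp" "cp_inj I P j c \<in> pcarrier Cp"
    using inj_carr abc by blast+
  have z: "cp_inj I P j (pzero Pj) = {}" unfolding inj_eq by simp
  have p1: "(a, c, b) \<in> pnull Pj" using ps_null_perm(2)[OF pj assms] .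
  have p2: "(b, c, a) \<in> pnull Pj" using ps_null_perm(2)[OF pj ps_null_perm(1)[OF pj assms]] .
  show ?thesis
  proof (cases "a = pzero Pj")
    case a0: True
    then have "b = pneg Pj c" using ps_null_zero[OF pj abc(2) abc(3)] p2 by simp
    then have "cp_inj I P j a = {} \<and> cp_inj I P j b = N (cp_inj I P j c)" using a0 z inj_neg[OF abc(3)] by simp
    then show ?thesis unfolding nullC using car by blast
  next
    case an: False
    show ?thesis
    proof (cases "b = pzero Pj")
      case b0: True
      then have "a = pneg Pj c" using ps_null_zero[OF pj abc(1) abc(3)] p1 by simp
      then have "cp_inj I P j b = {} \<and> cp_inj I P j a = N (cp_inj I P j c)" using b0 z inj_neg[OF abc(3)] by simp
      then show ?thesis unfolding nullC using car by blast
    next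
      case bn: False
      show ?thesis
      proof (cases "c = pzero Pj")
        case c0: True
        then have "a = pneg Pj b" using ps_null_zero[OF pj abc(1) abc(2)] assms by simp
        then have "cp_inj I P j c = {} \<and> cp_inj I P j a = N (cp_inj I P j b)" using c0 z inj_neg[OF abc(2)] by simp
        then show ?thesis unfolding nullC using car by blast
      next
        case cn: False
        have ia: "cp_inj I P j a = cl (e a)" "cp_inj I P j b = cl (e b)" "cp_inj I P j c = cl (e c)"
          unfolding inj_eq using an bn cn by simp_all
        have F3: "e a \<in> F" "e b \<in> F" "e c \<in> F" using e_F abc an bn cn by blast+
        have m: "e a \<in> cl (e a)" "e b \<in> cl (e b)" "e c \<in> cl (e c)" using class_mem F3 by blast+
        have cls: "cl (e a) \<in> cl ` F" "cl (e b) \<in> cl ` F" "cl (e c) \<in> cl ` F" using F3 by blast+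
        have nj: "(e a j, e b j, e c j) \<in> pnull (P j)" using assms unfolding cp_e_def by simp
        have eqs: "\<forall>i\<in>I - {j}. e a i = e b i \<and> e b i = e c i" unfolding cp_e_def by simp
        have ex: "\<exists>x\<in>cl (e a). \<exists>y\<in>cl (e b). \<exists>z\<in>cl (e c). \<exists>j'\<in>I.
            (x j', y j', z j') \<in> pnull (P j') \<and> (\<forall>i\<in>I - {j'}. x i = y i \<and> y i = z i)"
          using m nj eqs j by blast
        show ?thesis unfolding ia nullC apply (rule disjI1) using cls ex by blast
      qed
    qed
  qed
qed

lemma hom: "pasture_hom Pj Cp (cp_inj I P j)"
  unfolding pasture_hom_def
proof (intro conjI ballI allI impI)
  show "\<And>x. x \<in> pcarrier Pj \<Longrightarrow> cp_inj I P j x \<in> pcarrier Cp" using inj_carr .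
  show "cp_inj I P j (pzero Pj) = pzero Cp" unfolding inj_eq zeroC by simp
  show "cp_inj I P j (pone Pj) = pone Cp" unfolding inj_eq oneC using ps_one[OF pj] e_one by simp
  show "\<And>x y. x \<in> pcarrier Pj \<Longrightarrow> y \<in> pcarrier Pj \<Longrightarrow>
     cp_inj I P j (pmult Pj x y) = pmult Cp (cp_inj I P j x) (cp_inj I P j y)" using inj_mult .
  show "\<And>x. x \<in> pcarrier Pj \<Longrightarrow> cp_inj I P j (pneg Pj x) = N (cp_inj I P j x)" using inj_neg .
  show "\<And>a b c. (a, b, c) \<in> pnull Pj \<Longrightarrow> (cp_inj I P j a, cp_inj I P j b, cp_inj I P j c) \<in> pnull Cp"
    using inj_null .
qed

end

end



theorem lemma7p3:
  fixes I :: "'i set" and P :: "'i \<Rightarrow> 'a pasture"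
  assumes "\<forall>i\<in>I. pasture (P i)"
  shows "pasture (coprod I P) \<and> (\<forall>j\<in>I. pasture_hom (P j) (coprod I P) (cp_inj I P j))"
proof -
  interpret cpl I P using assms by unfold_locales
  show ?thesis using pasture_Cp hom by blast
qed

end
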